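(* Consider the plant $\dot x=Ax+B_1w+Bu$ with $A\mathbb{1}=0$ and $B$ of full column rank, in feedback with a state-feedback controller $u=Kx$ ($K$ a rational transfer matrix with $sI-A-BK(s)$ invertible), and let $\Phi_u(s)=K(s)(sI-A-BK(s))^{-1}$. Then $K(s)\mathbb{1}=0$ if and only if $\Phi_u(s)\mathbb{1}=0$. In particular, for the plant $\dot x=u+w$, a state-feedback controller $K$ satisfies $K\mathbb{1}=0$ iff the corresponding $\Phi_u$ satisfies $\Phi_u\mathbb{1}=0$.
   Context: $\mathbb{1}$ denotes the all-ones vector; a matrix (or transfer matrix) $M$ with $M\mathbb{1}=0$ is called relative. *)

theory Defs
  imports "HOL-Analysis.Analysis" "HOL-Computational_Algebra.Polynomial" "HOL-Computational_Algebra.Fraction_Field"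
begin

text \<open>Rational transfer functions: the field of real rational functions in the Laplace variable s.\<close>
type_synonym rfun = "real poly fract"

definition const_rf :: "real \<Rightarrow> rfun" where
  "const_rf a = Fract [:a:] 1"

definition s_rf :: rfun where
  "s_rf = Fract [:0, 1:] 1"

definition lift_mat :: "real^'c^'r \<Rightarrow> rfun^'c^'r" where
  "lift_mat M = (\<chi> i j. const_rf (M $ i $ j))"

definition ones :: "'a::one^'n" where
  "ones = (\<chi> i. 1)"

text \<open>Closed-loop map from disturbance to control input:
  Phi_u(s) = K(s) (sI - A - B K(s))^{-1}.\<close>
definition Phi_u :: "real^'n^'n \<Rightarrow> real^'m^'n \<Rightarrow> rfun^'n^'m \<Rightarrow> rfun^'n^'m" where
  "Phi_u A B K = K ** matrix_inv (mat s_rf - lift_mat A - lift_mat B ** K)"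

end

theory Submission
  imports Defs
begin

definition pf :: "real poly \<Rightarrow> rfun" where "pf p = Fract p 1"

lemma pf_add: "pf (p + q) = pf p + pf q" by (simp add: pf_def)
lemma pf_mult: "pf (p * q) = pf p * pf q" by (simp add: pf_def)
lemma pf_diff: "pf (p - q) = pf p - pf q" by (simp add: pf_def)
lemma pf_0: "pf 0 = 0" by (simp add: pf_def Zero_fract_def)
lemma pf_1: "pf 1 = 1" by (simp add: pf_def One_fract_def)
lemma pf_eq_0: "pf p = 0 \<longleftrightarrow> p = 0"
  by (simp add: pf_def Zero_fract_def eq_fract)
lemma pf_sum: "pf (\<Sum>k\<in>S. f k) = (\<Sum>k\<in>S. pf (f k))"
  by (induction S rule: infinite_finite_induct) (auto simp: pf_0 pf_add)
lemma pf_power: "pf (p ^ k) = pf p ^ k"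
  by (induction k) (auto simp: pf_1 pf_mult)

lemma const_pf: "const_rf a = pf [:a:]" by (simp add: const_rf_def pf_def)
lemma s_pf: "s_rf = pf [:0,1:]" by (simp add: s_rf_def pf_def)
lemma s_nz: "s_rf \<noteq> 0" by (simp add: s_pf pf_eq_0)

lemma const_add: "const_rf (a + b) = const_rf a + const_rf b"
  by (simp add: const_pf flip: pf_add)
lemma const_mult: "const_rf (a * b) = const_rf a * const_rf b"
  by (simp add: const_pf mult.commute flip: pf_mult)
lemma const_0: "const_rf 0 = 0" by (simp add: const_pf pf_0)
lemma const_1: "const_rf 1 = 1" by (simp add: const_pf flip: pf_1 one_pCons)
lemma const_sum: "const_rf (\<Sum>k\<in>S. f k) = (\<Sum>k\<in>S. const_rf (f k))"
  by (induction S rule: infinite_finite_induct) (auto simp: const_0 const_add)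

lemma const_s_pow: "const_rf a * s_rf ^ k = pf (monom a k)"
proof -
  have "[:0,1:] ^ k = (monom 1 k :: real poly)"
    by (simp add: monom_altdef)
  hence "const_rf a * s_rf ^ k = pf ([:a:] * monom 1 k)"
    by (simp only: const_pf s_pf pf_mult flip: pf_power)
  also have "[:a:] * monom 1 k = monom a k" by (simp add: smult_monom)
  finally show ?thesis .
qed

lemma lift_mult: "lift_mat (X ** Y) = lift_mat X ** lift_mat Y"
  by (simp add: lift_mat_def matrix_matrix_mult_def vec_eq_iff const_sum const_mult)
lemma lift_add: "lift_mat (X + Y) = lift_mat X + lift_mat Y"
  by (simp add: lift_mat_def vec_eq_iff const_add)
lemma lift_0: "lift_mat 0 = 0"
  by (simp add: lift_mat_def vec_eq_iff const_0)
lemma lift_sum: "lift_mat (\<Sum>k\<in>S. f k) = (\<Sum>k\<in>S. lift_mat (f k))"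
  by (induction S rule: infinite_finite_induct) (auto simp: lift_0 lift_add)
lemma lift_scale: "lift_mat (c *\<^sub>R X) *v v = const_rf c *s (lift_mat X *v v)"
  by (simp add: lift_mat_def vec_eq_iff matrix_vector_mult_def const_mult sum_distrib_left mult.assoc)
lemma sum_mv: "(\<Sum>k\<in>S. f k) *v v = (\<Sum>k\<in>S. f k *v v)"
  by (induction S rule: infinite_finite_induct) (auto simp: matrix_vector_mult_add_rdistrib)
lemma lift_mat1: "lift_mat (mat 1) = mat 1"
  by (simp add: lift_mat_def mat_def vec_eq_iff const_0 const_1)


fun mp :: "real^'n^'n \<Rightarrow> nat \<Rightarrow> real^'n^'n" where
  "mp A 0 = mat 1"
| "mp A (Suc k) = A ** mp A k"

lemma mp_iter:
  assumes "lift_mat A *v w = s_rf *s w"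
  shows "lift_mat (mp A k) *v w = s_rf ^ k *s w"
proof (induction k)
  case 0 then show ?case by (simp add: lift_mat1)
next
  case (Suc k)
  have "lift_mat (mp A (Suc k)) *v w = lift_mat A *v (lift_mat (mp A k) *v w)"
    by (simp add: lift_mult matrix_vector_mul_assoc)
  also have "\<dots> = s_rf ^ k *s (lift_mat A *v w)" by (simp add: Suc vector_scalar_commute)
  also have "\<dots> = s_rf ^ Suc k *s w" by (simp add: assms vector_smult_assoc mult.commute)
  finally show ?case .
qed


lemma t1:
  fixes A :: "real^'n^'n"
  shows "mp A ` {..<Suc N} = insert (mp A N) (mp A ` {..<N})"
    by (simp add: lessThan_Suc)

lemma t2:  fixes A :: "real^'n^'n"
  shows "independent (mp A ` {..<0})"
 by (simp add: independent_empty)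

lemma t3:
  fixes A :: "real^'n^'n"
  assumes "mp A N \<notin> span (mp A ` {..<N})" "independent (mp A ` {..<N})"
  shows "independent (insert (mp A N) (mp A ` {..<N}))"
  using assms by (rule independent_insertI)

lemma t4:
  fixes A :: "real^'n^'n"
  assumes "mp A N \<notin> mp A ` {..<N}" "card (mp A ` {..<N}) = N"
  shows "card (insert (mp A N) (mp A ` {..<N})) = Suc N"
  using assms by simp


lemma ind_step:
  fixes A :: "real^'n^'n"
  assumes np: "\<And>m. mp A m \<notin> span (mp A ` {..<m})"
  shows "independent (mp A ` {..<N}) \<and> card (mp A ` {..<N}) = N"
proof (induction N)
  case 0 show ?case
  proof
    show "independent (mp A ` {..<0})" by (rule t2)
    show "card (mp A ` {..<0}) = 0" by (simp only: lessThan_0 image_empty card.empty)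
  qed
next
  case (Suc N)
  have nin: "mp A N \<notin> mp A ` {..<N}"
  proof
    assume "mp A N \<in> mp A ` {..<N}"
    hence "mp A N \<in> span (mp A ` {..<N})" by (rule span_base)
    with np[of N] show False by contradiction
  qed
  have "independent (insert (mp A N) (mp A ` {..<N}))"
    using np[of N] Suc[THEN conjunct1] by (rule t3)
  moreover have "card (insert (mp A N) (mp A ` {..<N})) = Suc N"
    using nin Suc[THEN conjunct2] by (rule t4)
  ultimately show ?case unfolding t1 by (rule conjI)
qed

lemma ex_dep:
  fixes A :: "real^'n^'n"
  shows "\<exists>m. mp A m \<in> span (mp A ` {..<m})"
proof (rule ccontr)
  assume "\<nexists>m. mp A m \<in> span (mp A ` {..<m})"
  hence np: "\<And>m. mp A m \<notin> span (mp A ` {..<m})" by blast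
  have "independent (mp A ` {..<Suc DIM(real^'n^'n)})" "card (mp A ` {..<Suc DIM(real^'n^'n)}) = Suc DIM(real^'n^'n)"
    using ind_step[OF np] by blast+
  then show False using independent_bound[of "mp A ` {..<Suc DIM(real^'n^'n)}"] by linarith
qed


lemma mp_dep:
  fixes A :: "real^'n^'n"
  shows "\<exists>m. inj_on (mp A) {..<m} \<and> mp A m \<in> span (mp A ` {..<m})"
proof -
  define P where "P m \<longleftrightarrow> mp A m \<in> span (mp A ` {..<m})" for m
  have ex: "\<exists>m. P m" unfolding P_def by (rule ex_dep)
  define m where "m = (LEAST m. P m)"
  have Pm: "P m" unfolding m_def using ex by (rule LeastI_ex)
  have "inj_on (mp A) {..<m}"
  proof (rule inj_onI)
    fix i j assume i: "i \<in> {..<m}" and j: "j \<in> {..<m}" and e: "mp A i = mp A j"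
    have nP: "\<not> P k" if "k < m" for k
      using that unfolding m_def by (rule not_less_Least)
    show "i = j"
    proof (rule ccontr)
      assume "i \<noteq> j"
      then consider "i < j" | "j < i" by linarith
      then show False
      proof cases
        case 1
        have "mp A j \<in> mp A ` {..<j}" using 1 e by (intro image_eqI[of _ _ i]) auto
        hence "P j" unfolding P_def by (rule span_base)
        moreover have "j < m" using j by simp
        ultimately show False using nP by blast
      next
        case 2
        have "mp A i \<in> mp A ` {..<i}" using 2 e by (intro image_eqI[of _ _ j]) auto
        hence "P i" unfolding P_def by (rule span_base)
        moreover have "i < m" using i by simp
        ultimately show False using nP by blast
      qed
    qed
  qed
  then show ?thesis using Pm unfolding P_def by blast
qed

lemma sum_smult: "(\<Sum>k\<in>S. c k) *s (w::'a::semiring_0^'n) = (\<Sum>k\<in>S. c k *s w)"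
  by (induction S rule: infinite_finite_induct) (auto simp: vector_sadd_rdistrib)


lemma key:
  fixes A :: "real^'n^'n" and w :: "rfun^'n"
  assumes hw: "lift_mat A *v w = s_rf *s w"
  shows "w = 0"
proof -
  obtain m where inj: "inj_on (mp A) {..<m}" and sp: "mp A m \<in> span (mp A ` {..<m})"
    using mp_dep by blast
  have fin: "finite (mp A ` {..<m})" by simp
  obtain u where u: "mp A m = (\<Sum>x\<in>mp A ` {..<m}. u x *\<^sub>R x)"
    using sp unfolding span_finite[OF fin] by blast
  have u2: "mp A m = (\<Sum>k<m. u (mp A k) *\<^sub>R mp A k)"
    using u sum.reindex[OF inj, of "\<lambda>x. u x *\<^sub>R x"] by simp
  define c where "c k = u (mp A k)" for k
  have "s_rf ^ m *s w = lift_mat (mp A m) *v w" by (simp add: mp_iter[OF hw])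
  also have "\<dots> = (\<Sum>k<m. lift_mat (c k *\<^sub>R mp A k) *v w)"
    by (simp add: u2 c_def lift_sum sum_mv del: mp.simps)
  also have "\<dots> = (\<Sum>k<m. (const_rf (c k) * s_rf ^ k) *s w)"
    by (simp add: lift_scale mp_iter[OF hw] vector_smult_assoc del: mp.simps)
  also have "\<dots> = (\<Sum>k<m. const_rf (c k) * s_rf ^ k) *s w"
    by (simp add: sum_smult)
  finally have "(s_rf ^ m - (\<Sum>k<m. const_rf (c k) * s_rf ^ k)) *s w = 0"
    by (simp add: vector_sub_rdistrib)
  moreover have "s_rf ^ m - (\<Sum>k<m. const_rf (c k) * s_rf ^ k) = pf (monom 1 m - (\<Sum>k<m. monom (c k) k))"
    by (simp add: pf_diff pf_sum flip: const_s_pow) (simp add: const_1)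
  moreover have "monom 1 m - (\<Sum>k<m. monom (c k) k) \<noteq> 0"
  proof
    assume "monom 1 m - (\<Sum>k<m. monom (c k) k) = 0"
    hence "coeff (monom 1 m - (\<Sum>k<m. monom (c k) k)) m = 0" by simp
    then show False by (simp add: coeff_sum)
  qed
  ultimately show ?thesis by (simp add: pf_eq_0)
qed


lemma mat_mv: "mat c *v x = c *s (x :: 'a::comm_semiring_1^'n)"
proof -
  have "(\<Sum>j\<in>UNIV. (if i = j then c else 0) * x $ j) = (\<Sum>j\<in>UNIV. if i = j then c * x$j else 0)" for i
    by (rule sum.cong) auto
  thus ?thesis by (simp add: vec_eq_iff matrix_vector_mult_def mat_def)
qed

lemma general:
  fixes A :: "real^'n^'n" and B :: "real^'m^'n" and K :: "rfun^'n^'m"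
  assumes A1: "A *v ones = 0"
    and inv: "invertible (mat s_rf - lift_mat A - lift_mat B ** K)"
  shows "K *v ones = 0 \<longleftrightarrow> Phi_u A B K *v ones = 0"
proof -
  define M where "M = mat s_rf - lift_mat A - lift_mat B ** K"
  define Mi where "Mi = matrix_inv M"
  have "M ** Mi = mat 1 \<and> Mi ** M = mat 1"
    using inv unfolding M_def Mi_def invertible_def matrix_inv_def by (rule someI_ex)
  hence MMi: "M ** Mi = mat 1" and MiM: "Mi ** M = mat 1" by auto
  have LA1: "lift_mat A *v (ones :: rfun^'n) = 0"
  proof -
    have "(lift_mat A *v (ones :: rfun^'n)) $ i = const_rf ((A *v ones) $ i)" for i
      by (simp add: lift_mat_def matrix_vector_mult_def ones_def const_sum)
    thus ?thesis using A1 by (simp add: vec_eq_iff const_0)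
  qed
  have Mv: "M *v x = s_rf *s x - lift_mat A *v x - lift_mat B *v (K *v x)" for x
    by (simp add: M_def matrix_vector_mult_diff_rdistrib mat_mv matrix_vector_mul_assoc)
  have Phi: "Phi_u A B K *v ones = K *v (Mi *v ones)"
    by (simp add: Phi_u_def M_def Mi_def matrix_vector_mul_assoc)
  have sinv: "s_rf * inverse s_rf = 1" "inverse s_rf \<noteq> 0" using s_nz by auto
  show ?thesis
  proof
    assume K1: "K *v ones = 0"
    have "M *v (inverse s_rf *s ones) = inverse s_rf *s (M *v ones)"
      by (simp add: vector_scalar_commute)
    also have "M *v ones = s_rf *s ones" by (simp add: Mv K1 LA1)
    finally have "M *v (inverse s_rf *s ones) = ones"
      by (simp add: vector_smult_assoc sinv mult.commute)
    hence "Mi *v ones = Mi *v (M *v (inverse s_rf *s ones))" by simp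
    also have "\<dots> = inverse s_rf *s ones" by (simp add: matrix_vector_mul_assoc MiM)
    finally show "Phi_u A B K *v ones = 0"
      by (simp add: Phi vector_scalar_commute K1)
  next
    assume P1: "Phi_u A B K *v ones = 0"
    define v where "v = Mi *v ones"
    have Mvv: "M *v v = ones" by (simp add: v_def matrix_vector_mul_assoc MMi)
    have Kv: "K *v v = 0" using P1 by (simp add: Phi v_def)
    have e: "s_rf *s v - lift_mat A *v v = ones" using Mvv by (simp add: Mv Kv)
    define w where "w = v - inverse s_rf *s ones"
    have "lift_mat A *v w = lift_mat A *v v"
      by (simp add: w_def matrix_vector_mult_diff_distrib vector_scalar_commute LA1)
    also have "\<dots> = s_rf *s v - ones" using e by (simp add: algebra_simps)
    also have "\<dots> = s_rf *s w"
      by (simp add: w_def vector_ssub_ldistrib vector_smult_assoc sinv)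
    finally have "w = 0" by (rule key)
    hence "v = inverse s_rf *s ones" by (simp add: w_def)
    hence "inverse s_rf *s (K *v ones) = 0" using Kv by (simp add: vector_scalar_commute)
    thus "K *v ones = 0" using sinv by simp
  qed
qed

theorem lemma4:
  fixes A :: "real^'n^'n" and B :: "real^'m^'n" and K :: "rfun^'n^'m"
  assumes "A *v ones = 0"
    and "rank B = CARD('m)"
    and "invertible (mat s_rf - lift_mat A - lift_mat B ** K)"
  shows "(K *v ones = 0 \<longleftrightarrow> Phi_u A B K *v ones = 0)
    \<and> (\<forall>K' :: rfun^'n^'n.
          invertible (mat s_rf - lift_mat (0 :: real^'n^'n) - lift_mat (mat 1 :: real^'n^'n) ** K') \<longrightarrow>
          (K' *v ones = 0 \<longleftrightarrow> Phi_u 0 (mat 1) K' *v ones = 0))"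
proof
  show "K *v ones = 0 \<longleftrightarrow> Phi_u A B K *v ones = 0"
    using general[OF assms(1) assms(3)] .
  show "\<forall>K' :: rfun^'n^'n.
          invertible (mat s_rf - lift_mat (0 :: real^'n^'n) - lift_mat (mat 1 :: real^'n^'n) ** K') \<longrightarrow>
          (K' *v ones = 0 \<longleftrightarrow> Phi_u 0 (mat 1) K' *v ones = 0)"
  proof (intro allI impI)
    fix K' :: "rfun^'n^'n"
    assume "invertible (mat s_rf - lift_mat (0 :: real^'n^'n) - lift_mat (mat 1 :: real^'n^'n) ** K')"
    moreover have "(0 :: real^'n^'n) *v ones = 0" by simp
    ultimately show "K' *v ones = 0 \<longleftrightarrow> Phi_u 0 (mat 1) K' *v ones = 0"
      using general by blast
  qed
qed

end
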